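(* (i) If a variety $\mathcal V$ is $3$-modular, then $\mathcal V$ is $(m,m)$-modular for every $m\ge3$. (ii) If a variety $\mathcal V$ is $4$-modular, then $\mathcal V$ is $(2^q-1,2^q)$-modular for every $q\ge2$.
   Context: $\circ$ denotes relational composition, juxtaposition denotes intersection. For relations $X,Y$ and $m\ge1$, $X\circ_m Y$ denotes $X\circ Y\circ X\circ\cdots$ with $m$ factors. For $m\ge3$, a variety $\mathcal V$ is $(m,k)$-modular if every algebra in $\mathcal V$ satisfies $\alpha(\beta\circ_m\alpha\gamma)\subseteq\alpha\beta\circ_k\alpha\gamma$ for all congruences $\alpha,\beta,\gamma$; $k$-modular means $(3,k)$-modular. *)

theory Defs
  imports Main
begin

datatype ('f, 'v) trm = Var 'v | Fun 'f "('f, 'v) trm list"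

text \<open>An algebra of signature (ar :: 'f => nat): a carrier and, for each operation
symbol f, an operation acting on lists (only lists of length ar f are relevant).\<close>
record ('f, 'a) alg =
  carr :: "'a set"
  ops :: "'f \<Rightarrow> 'a list \<Rightarrow> 'a"

definition is_alg :: "('f \<Rightarrow> nat) \<Rightarrow> ('f, 'a) alg \<Rightarrow> bool" where
  "is_alg ar A \<longleftrightarrow> carr A \<noteq> {} \<and>
     (\<forall>f xs. length xs = ar f \<and> set xs \<subseteq> carr A \<longrightarrow> ops A f xs \<in> carr A)"

fun wf_trm :: "('f \<Rightarrow> nat) \<Rightarrow> ('f, 'v) trm \<Rightarrow> bool" where
  "wf_trm ar (Var v) = True"
| "wf_trm ar (Fun f ts) = (length ts = ar f \<and> (\<forall>t\<in>set ts. wf_trm ar t))"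

fun eval :: "('f, 'a) alg \<Rightarrow> ('v \<Rightarrow> 'a) \<Rightarrow> ('f, 'v) trm \<Rightarrow> 'a" where
  "eval A \<rho> (Var v) = \<rho> v"
| "eval A \<rho> (Fun f ts) = ops A f (map (eval A \<rho>) ts)"

definition identities :: "('f \<Rightarrow> nat) \<Rightarrow> (('f, 'v) trm \<times> ('f, 'v) trm) set \<Rightarrow> bool" where
  "identities ar E \<longleftrightarrow> (\<forall>(s, t)\<in>E. wf_trm ar s \<and> wf_trm ar t)"

definition model :: "('f \<Rightarrow> nat) \<Rightarrow> (('f, 'v) trm \<times> ('f, 'v) trm) set \<Rightarrow> ('f, 'a) alg \<Rightarrow> bool" where
  "model ar E A \<longleftrightarrow> is_alg ar A \<and>
     (\<forall>(s, t)\<in>E. \<forall>\<rho>. (\<forall>v. \<rho> v \<in> carr A) \<longrightarrow> eval A \<rho> s = eval A \<rho> t)"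

definition congruence :: "('f \<Rightarrow> nat) \<Rightarrow> ('f, 'a) alg \<Rightarrow> 'a rel \<Rightarrow> bool" where
  "congruence ar A \<theta> \<longleftrightarrow> equiv (carr A) \<theta> \<and>
     (\<forall>f xs ys. length xs = ar f \<and> length ys = ar f \<and> list_all2 (\<lambda>x y. (x, y) \<in> \<theta>) xs ys
        \<longrightarrow> (ops A f xs, ops A f ys) \<in> \<theta>)"

fun alt_comp :: "'a rel \<Rightarrow> 'a rel \<Rightarrow> nat \<Rightarrow> 'a rel" where
  "alt_comp X Y 0 = Id"
| "alt_comp X Y (Suc 0) = X"
| "alt_comp X Y (Suc (Suc n)) = X O alt_comp Y X (Suc n)"

definition mk_modular_alg :: "('f \<Rightarrow> nat) \<Rightarrow> ('f, 'a) alg \<Rightarrow> nat \<Rightarrow> nat \<Rightarrow> bool" where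
  "mk_modular_alg ar A m k \<longleftrightarrow>
     (\<forall>\<alpha> \<beta> \<gamma>. congruence ar A \<alpha> \<and> congruence ar A \<beta> \<and> congruence ar A \<gamma> \<longrightarrow>
        \<alpha> \<inter> alt_comp \<beta> (\<alpha> \<inter> \<gamma>) m \<subseteq> alt_comp (\<alpha> \<inter> \<beta>) (\<alpha> \<inter> \<gamma>) k)"

end

theory Submission
  imports Defs
begin


lemma alt_comp_Suc: "alt_comp X Y (Suc k) = X O alt_comp Y X k"
  by (cases k) auto

lemma alt_comp_snoc: "alt_comp X Y (Suc k) = alt_comp X Y k O (if even k then X else Y)"
proof (induction k arbitrary: X Y)
  case 0 then show ?case by simp
next
  case (Suc k)
  have "alt_comp X Y (Suc (Suc k)) = X O alt_comp Y X (Suc k)" by simp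
  also have "\<dots> = X O (alt_comp Y X k O (if even k then Y else X))" using Suc by simp
  also have "\<dots> = (X O alt_comp Y X k) O (if even (Suc k) then X else Y)" by (simp add: O_assoc)
  also have "X O alt_comp Y X k = alt_comp X Y (Suc k)" by (simp add: alt_comp_Suc)
  finally show ?case .
qed

lemma alt_comp_add: "alt_comp X Y (a + b) = alt_comp X Y a O (if even a then alt_comp X Y b else alt_comp Y X b)"
proof (induction a arbitrary: X Y)
  case 0 then show ?case by simp
next
  case (Suc a)
  have "alt_comp X Y (Suc a + b) = X O alt_comp Y X (a + b)" by (simp add: alt_comp_Suc)
  also have "\<dots> = X O (alt_comp Y X a O (if even a then alt_comp Y X b else alt_comp X Y b))" using Suc by simp
  also have "\<dots> = alt_comp X Y (Suc a) O (if even (Suc a) then alt_comp X Y b else alt_comp Y X b)"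
    by (simp add: alt_comp_Suc O_assoc)
  finally show ?case .
qed

lemma alt_comp_conv:
  assumes "sym X" "sym Y"
  shows "(alt_comp X Y k)\<inverse> = (if even k then alt_comp Y X k else alt_comp X Y k)"
  using assms
proof (induction k arbitrary: X Y)
  case 0 then show ?case by simp
next
  case (Suc k)
  have "(alt_comp X Y (Suc k))\<inverse> = (alt_comp Y X k)\<inverse> O X\<inverse>" by (simp add: alt_comp_Suc converse_relcomp)
  also have "\<dots> = (if even k then alt_comp X Y k else alt_comp Y X k) O X"
    using Suc by (simp add: sym_conv_converse_eq)
  also have "\<dots> = (if even (Suc k) then alt_comp Y X (Suc k) else alt_comp X Y (Suc k))"
    by (simp add: alt_comp_snoc)
  finally show ?case .
qed

lemma equiv_OO: "equiv C X \<Longrightarrow> X O X = X"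
  unfolding equiv_def refl_on_def trans_def by blast

lemma alt_comp_sub: "equiv C X \<Longrightarrow> equiv C Y \<Longrightarrow> alt_comp X Y (Suc k) \<subseteq> C \<times> C"
proof (induction k arbitrary: X Y)
  case 0 then show ?case by (simp add: equiv_def refl_on_def)
next
  case (Suc k)
  have "alt_comp Y X (Suc k) \<subseteq> C \<times> C" using Suc by blast
  moreover have "X \<subseteq> C \<times> C" using Suc.prems by (simp add: equiv_def refl_on_def)
  ultimately show ?case by (subst alt_comp_Suc) blast
qed

lemma alt_comp_mono1: "equiv C X \<Longrightarrow> equiv C Y \<Longrightarrow> 1 \<le> k \<Longrightarrow> alt_comp X Y k \<subseteq> alt_comp X Y (Suc k)"
proof -
  assume e: "equiv C X" "equiv C Y" "1 \<le> k"
  then obtain k' where k: "k = Suc k'" by (cases k) auto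
  have s: "alt_comp X Y k \<subseteq> C \<times> C" using alt_comp_sub[OF e(1,2)] k by blast
  have r: "\<And>c. c \<in> C \<Longrightarrow> (c, c) \<in> (if even k then X else Y)"
    using e by (auto simp: equiv_def refl_on_def)
  show ?thesis unfolding alt_comp_snoc[of X Y k] using s r by blast
qed

lemma alt_comp_mono: "equiv C X \<Longrightarrow> equiv C Y \<Longrightarrow> 1 \<le> k \<Longrightarrow> k \<le> l \<Longrightarrow> alt_comp X Y k \<subseteq> alt_comp X Y l"
proof (induction l)
  case 0 then show ?case by simp
next
  case (Suc l)
  show ?case
  proof (cases "k = Suc l")
    case True then show ?thesis by simp
  next
    case False
    then have "alt_comp X Y k \<subseteq> alt_comp X Y l" using Suc by simp
    also have "\<dots> \<subseteq> alt_comp X Y (Suc l)" using alt_comp_mono1[of C X Y l] Suc.prems False by simp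
    finally show ?thesis .
  qed
qed

lemma alt_comp_shift: "equiv C X \<Longrightarrow> equiv C Y \<Longrightarrow> 1 \<le> k \<Longrightarrow> alt_comp Y X k \<subseteq> alt_comp X Y (Suc k)"
proof -
  assume e: "equiv C X" "equiv C Y" "1 \<le> k"
  then obtain k' where k: "k = Suc k'" by (cases k) auto
  have s: "alt_comp Y X k \<subseteq> C \<times> C" using alt_comp_sub[OF e(2,1)] k by blast
  have r: "\<And>c. c \<in> C \<Longrightarrow> (c, c) \<in> X"
    using e by (auto simp: equiv_def refl_on_def)
  show ?thesis unfolding alt_comp_Suc[of X Y k] using s r by blast
qed

lemma alt_comp_merge_odd:
  assumes "equiv C X" "odd a" "1 \<le> b"
  shows "alt_comp X Y a O alt_comp X Y b = alt_comp X Y (a + b - 1)"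
proof -
  obtain a' where a: "a = Suc a'" "even a'" using assms(2) by (cases a) auto
  obtain b' where b: "b = Suc b'" using assms(3) by (cases b) auto
  have XX: "X O X = X" using equiv_OO[OF assms(1)] .
  have "alt_comp X Y a O alt_comp X Y b = alt_comp X Y a' O (X O X) O alt_comp Y X b'"
    unfolding a(1) b alt_comp_snoc[of X Y a'] alt_comp_Suc[of X Y b'] using a(2) by (simp add: O_assoc)
  also have "\<dots> = alt_comp X Y a' O alt_comp X Y b" unfolding XX b alt_comp_Suc[of X Y b'] by (simp add: O_assoc)
  also have "\<dots> = alt_comp X Y (a' + b)" using a by (simp add: alt_comp_add)
  finally show ?thesis using a by simp
qed

lemma alt_comp_merge_even:
  assumes "equiv C Y" "even a" "1 \<le> a" "1 \<le> b"
  shows "alt_comp X Y a O alt_comp Y X b = alt_comp X Y (a + b - 1)"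
proof -
  obtain a' where a: "a = Suc a'" "odd a'" using assms(2,3) by (cases a) auto
  obtain b' where b: "b = Suc b'" using assms(4) by (cases b) auto
  have YY: "Y O Y = Y" using equiv_OO[OF assms(1)] .
  have "alt_comp X Y a O alt_comp Y X b = alt_comp X Y a' O (Y O Y) O alt_comp X Y b'"
    unfolding a(1) b alt_comp_snoc[of X Y a'] alt_comp_Suc[of Y X b'] using a(2) by (simp add: O_assoc)
  also have "\<dots> = alt_comp X Y a' O alt_comp Y X b" unfolding YY b alt_comp_Suc[of Y X b'] by (simp add: O_assoc)
  also have "\<dots> = alt_comp X Y (a' + b)" using a by (simp add: alt_comp_add)
  finally show ?thesis using a by simp
qed



definition env4 :: "'a \<Rightarrow> 'a \<Rightarrow> 'a \<Rightarrow> 'a \<Rightarrow> nat \<Rightarrow> 'a" where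
  "env4 a b c d v = (if v = 0 then a else if v = 1 then b else if v = 2 then c else d)"

definition tcompat :: "('f, 'a) alg \<Rightarrow> 'a rel \<Rightarrow> ('f, nat) trm \<Rightarrow> bool" where
  "tcompat A Z t \<longleftrightarrow> (\<forall>\<rho> \<rho>'. (\<forall>v. (\<rho> v, \<rho>' v) \<in> Z) \<longrightarrow> (eval A \<rho> t, eval A \<rho>' t) \<in> Z)"

lemma tcompat_cong:
  fixes A :: "('f, 'a) alg"
  assumes "congruence ar A \<theta>" "wf_trm ar t"
  shows "tcompat A \<theta> t"
  unfolding tcompat_def
proof (intro allI impI)
  fix \<rho> \<rho>' :: "nat \<Rightarrow> 'a" assume h: "\<forall>v. (\<rho> v, \<rho>' v) \<in> \<theta>"
  show "(eval A \<rho> t, eval A \<rho>' t) \<in> \<theta>" using assms(2)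
  proof (induction t)
    case (Var v) then show ?case using h by simp
  next
    case (Fun f ts)
    have l: "length ts = ar f" and w: "\<forall>t\<in>set ts. wf_trm ar t" using Fun.prems by auto
    have "list_all2 (\<lambda>x y. (x, y) \<in> \<theta>) (map (eval A \<rho>) ts) (map (eval A \<rho>') ts)"
      using Fun.IH w by (auto simp: list_all2_conv_all_nth)
    then show ?case using assms(1) l unfolding congruence_def by simp
  qed
qed

lemma tcompat_O:
  fixes A :: "('f, 'a) alg"
  shows "tcompat A R t \<Longrightarrow> tcompat A S t \<Longrightarrow> tcompat A (R O S) t"
  unfolding tcompat_def
proof (intro allI impI)
  fix \<rho> \<rho>' :: "nat \<Rightarrow> 'a" assume R: "\<forall>\<rho> \<rho>'. (\<forall>v. (\<rho> v, \<rho>' v) \<in> R) \<longrightarrow> (eval A \<rho> t, eval A \<rho>' t) \<in> R"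
    and S: "\<forall>\<rho> \<rho>'. (\<forall>v. (\<rho> v, \<rho>' v) \<in> S) \<longrightarrow> (eval A \<rho> t, eval A \<rho>' t) \<in> S"
    and h: "\<forall>v. (\<rho> v, \<rho>' v) \<in> R O S"
  define \<mu> where "\<mu> v = (SOME m. (\<rho> v, m) \<in> R \<and> (m, \<rho>' v) \<in> S)" for v
  have m: "(\<rho> v, \<mu> v) \<in> R \<and> (\<mu> v, \<rho>' v) \<in> S" for v
    unfolding \<mu>_def using h by (metis (mono_tags, lifting) relcompE someI_ex prod.inject)
  show "(eval A \<rho> t, eval A \<rho>' t) \<in> R O S"
    using R[rule_format, of \<rho> \<mu>] S[rule_format, of \<mu> \<rho>'] m by blast
qed

lemma tcompat_alt:
  assumes "congruence ar A X" "congruence ar A Y" "wf_trm ar t"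
  shows "tcompat A (alt_comp X Y (Suc k)) t"
  using assms(1,2)
proof (induction k arbitrary: X Y)
  case 0 then show ?case using tcompat_cong assms(3) by simp
next
  case (Suc k)
  then show ?case unfolding alt_comp_Suc[of X Y "Suc k"]
    using tcompat_O tcompat_cong assms(3) by blast
qed

lemma tcompat_env4:
  assumes "tcompat A Z t" "(a, a') \<in> Z" "(b, b') \<in> Z" "(c, c') \<in> Z" "(d, d') \<in> Z"
  shows "(eval A (env4 a b c d) t, eval A (env4 a' b' c' d') t) \<in> Z"
  using assms unfolding tcompat_def env4_def by auto

lemma eval_closed:
  assumes "is_alg ar A" "\<forall>v. \<rho> v \<in> carr A" "wf_trm ar t"
  shows "eval A \<rho> t \<in> carr A"
  using assms(3)
proof (induction t)
  case (Var v) then show ?case using assms(2) by simp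
next
  case (Fun f ts)
  then have "set (map (eval A \<rho>) ts) \<subseteq> carr A" "length (map (eval A \<rho>) ts) = ar f" by auto
  then show ?case using assms(1) unfolding is_alg_def by simp
qed

lemma env4_carr: "a \<in> C \<Longrightarrow> b \<in> C \<Longrightarrow> c \<in> C \<Longrightarrow> d \<in> C \<Longrightarrow> \<forall>v. env4 a b c d v \<in> C"
  unfolding env4_def by auto

lemma congruence_Int: "congruence ar A X \<Longrightarrow> congruence ar A Y \<Longrightarrow> congruence ar A (X \<inter> Y)"
proof -
  assume x: "congruence ar A X" and y: "congruence ar A Y"
  have "equiv (carr A) (X \<inter> Y)" using x y unfolding congruence_def equiv_def refl_on_def sym_def trans_def by blast
  moreover have "(ops A f xs, ops A f ys) \<in> X \<inter> Y"
    if "length xs = ar f" "length ys = ar f" "list_all2 (\<lambda>x y. (x, y) \<in> X \<inter> Y) xs ys" for f xs ys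
  proof -
    have "list_all2 (\<lambda>x y. (x, y) \<in> X) xs ys" "list_all2 (\<lambda>x y. (x, y) \<in> Y) xs ys"
      using that(3) by (auto elim: list_all2_mono)
    then show ?thesis using x y that(1,2) unfolding congruence_def by blast
  qed
  ultimately show ?thesis unfolding congruence_def by blast
qed

lemma cong_equiv: "congruence ar A X \<Longrightarrow> equiv (carr A) X"
  unfolding congruence_def by simp



lemma single_i:
  fixes A :: "('f, 'a) alg"
  assumes alg: "is_alg ar A"
    and ca: "congruence ar A \<alpha>" and cb: "congruence ar A \<beta>" and cg: "congruence ar A \<gamma>"
    and w1: "wf_trm ar e1" and w2: "wf_trm ar e2"
    and J1a: "\<And>a b. a \<in> carr A \<Longrightarrow> b \<in> carr A \<Longrightarrow> eval A (env4 a b b a) e1 = a"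
    and J1b: "\<And>a b. a \<in> carr A \<Longrightarrow> b \<in> carr A \<Longrightarrow> eval A (env4 a b b a) e2 = a"
    and J2: "\<And>a c. a \<in> carr A \<Longrightarrow> c \<in> carr A \<Longrightarrow> eval A (env4 a a c c) e1 = a"
    and J3: "\<And>a b d. a \<in> carr A \<Longrightarrow> b \<in> carr A \<Longrightarrow> d \<in> carr A \<Longrightarrow>
               eval A (env4 a b b d) e1 = eval A (env4 a b b d) e2"
    and J4: "\<And>a c. a \<in> carr A \<Longrightarrow> c \<in> carr A \<Longrightarrow> eval A (env4 a a c c) e2 = c"
  shows "1 \<le> n \<Longrightarrow> \<alpha> \<inter> alt_comp \<beta> (\<alpha> \<inter> \<gamma>) n \<subseteq> alt_comp (\<alpha> \<inter> \<beta>) (\<alpha> \<inter> \<gamma>) n"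
proof (induction n rule: less_induct)
  case (less n)
  define G where "G = \<alpha> \<inter> \<gamma>"
  define C where "C = carr A"
  have cG: "congruence ar A G" unfolding G_def using congruence_Int[OF ca cg] .
  have cAB: "congruence ar A (\<alpha> \<inter> \<beta>)" using congruence_Int[OF ca cb] .
  have eB: "equiv C \<beta>" and eG: "equiv C G" and eA: "equiv C \<alpha>" and eAB: "equiv C (\<alpha> \<inter> \<beta>)"
    and eGa: "equiv C \<gamma>"
    using cong_equiv cG cAB ca cb cg unfolding C_def by auto
  have symB: "sym \<beta>" and symG: "sym G" using eB eG by (auto simp: equiv_def)
  have Bsub: "\<beta> \<subseteq> C \<times> C" and Gsub: "G \<subseteq> C \<times> C" and Asub: "\<alpha> \<subseteq> C \<times> C"
    using eB eG eA by (auto simp: equiv_def refl_on_def)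
  have reflB: "(c, c) \<in> \<beta>" and reflA: "(c, c) \<in> \<alpha>" and reflGa: "(c, c) \<in> \<gamma>" if "c \<in> C" for c
    using that eB eA eGa by (auto simp: equiv_def refl_on_def)
  have symA: "(a, b) \<in> \<alpha> \<Longrightarrow> (b, a) \<in> \<alpha>" and symB': "(a, b) \<in> \<beta> \<Longrightarrow> (b, a) \<in> \<beta>"
    and symGa: "(a, b) \<in> \<gamma> \<Longrightarrow> (b, a) \<in> \<gamma>" for a b
    using eA eB eGa by (auto simp: equiv_def sym_def)
  have transA: "(a, b) \<in> \<alpha> \<Longrightarrow> (b, c) \<in> \<alpha> \<Longrightarrow> (a, c) \<in> \<alpha>"
    and transGa: "(a, b) \<in> \<gamma> \<Longrightarrow> (b, c) \<in> \<gamma> \<Longrightarrow> (a, c) \<in> \<gamma>" for a b c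
    using eA eGa by (auto simp: equiv_def trans_def)
  have GA: "G \<subseteq> \<alpha>" unfolding G_def by auto
  have tA1: "tcompat A \<alpha> e1" "tcompat A \<alpha> e2" using tcompat_cong ca w1 w2 by auto
  have tB: "tcompat A \<beta> e1" "tcompat A \<beta> e2" using tcompat_cong cb w1 w2 by auto
  have tGa: "tcompat A \<gamma> e1" "tcompat A \<gamma> e2" using tcompat_cong cg w1 w2 by auto
  have Aodd: "(alt_comp \<beta> G k)\<inverse> = alt_comp \<beta> G k" if "odd k" for k
    using alt_comp_conv[OF symB symG, of k] that by simp
  have ualpha: "(eval A (env4 x c c y) e1, x) \<in> \<alpha>"
    if "(x, y) \<in> \<alpha>" "c \<in> C" for x y c
  proof -
    have xC: "x \<in> C" using that(1) Asub by auto
    have "(eval A (env4 x c c y) e1, eval A (env4 x c c x) e1) \<in> \<alpha>"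
      using tcompat_env4[OF tA1(1)] reflA xC that symA by blast
    then show ?thesis using J1a xC that(2) unfolding C_def by simp
  qed
  show ?case
  proof (rule subrelI)
    fix x y assume xy: "(x, y) \<in> \<alpha> \<inter> alt_comp \<beta> (\<alpha> \<inter> \<gamma>) n"
    then have xya: "(x, y) \<in> \<alpha>" and xyn: "(x, y) \<in> alt_comp \<beta> G n" unfolding G_def by auto
    have xC: "x \<in> C" and yC: "y \<in> C" using xya Asub by auto
    have "n = 1 \<or> n = 3 \<or> even n \<or> (odd n \<and> 5 \<le> n)" using less.prems by presburger
    then consider "n = 1" | "n = 3" | "even n" | "odd n" "5 \<le> n" by blast
    then show "(x, y) \<in> alt_comp (\<alpha> \<inter> \<beta>) (\<alpha> \<inter> \<gamma>) n"
    proof cases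
      case 1 then show ?thesis using xya xyn by simp
    next
      case 2
      then have "(x, y) \<in> \<beta> O G O \<beta>" using xyn by (simp add: numeral_3_eq_3)
      then obtain c d where xc: "(x, c) \<in> \<beta>" and cd: "(c, d) \<in> G" and dy: "(d, y) \<in> \<beta>" by blast
      have cC: "c \<in> C" and dC: "d \<in> C" using cd Gsub by auto
      define u1 where "u1 = eval A (env4 x c d y) e1"
      define u2 where "u2 = eval A (env4 x c d y) e2"
      have cdA: "(c, d) \<in> \<alpha>" "(d, c) \<in> \<alpha>" "(c, d) \<in> \<gamma>" "(d, c) \<in> \<gamma>"
        using cd symA symGa unfolding G_def by auto
      have yxA: "(y, x) \<in> \<alpha>" using symA xya by blast
      have "(u1, eval A (env4 x x y y) e1) \<in> \<beta>"
        unfolding u1_def using tcompat_env4[OF tB(1)] reflB xC yC xc dy symB' by blast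
      then have u1b: "(u1, x) \<in> \<beta>" using J2 xC yC unfolding C_def by simp
      have "(u1, eval A (env4 x c c x) e1) \<in> \<alpha>"
        unfolding u1_def using tcompat_env4[OF tA1(1)] reflA xC cC cdA yxA by blast
      then have u1a: "(u1, x) \<in> \<alpha>" using J1a xC cC unfolding C_def by simp
      have "(u2, eval A (env4 x x y y) e2) \<in> \<beta>"
        unfolding u2_def using tcompat_env4[OF tB(2)] reflB xC yC xc dy symB' by blast
      then have u2b: "(u2, y) \<in> \<beta>" using J4 xC yC unfolding C_def by simp
      have "(u2, eval A (env4 x c c x) e2) \<in> \<alpha>"
        unfolding u2_def using tcompat_env4[OF tA1(2)] reflA xC cC cdA yxA by blast
      then have u2a: "(u2, x) \<in> \<alpha>" using J1b xC cC unfolding C_def by simp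
      have "(u1, eval A (env4 x c c y) e1) \<in> \<gamma>"
        unfolding u1_def using tcompat_env4[OF tGa(1)] reflGa xC cC yC cdA by blast
      moreover have "(eval A (env4 x c c y) e2, u2) \<in> \<gamma>"
        unfolding u2_def using tcompat_env4[OF tGa(2)] reflGa xC cC yC cdA by blast
      ultimately have u12g: "(u1, u2) \<in> \<gamma>" using J3 xC cC yC transGa unfolding C_def by metis
      have "(x, u1) \<in> \<alpha> \<inter> \<beta>" using u1a u1b symA symB' by blast
      moreover have "(u1, u2) \<in> \<alpha> \<inter> \<gamma>" using u12g u1a u2a symA transA by blast
      moreover have "(u2, y) \<in> \<alpha> \<inter> \<beta>" using u2a u2b xya transA by blast
      ultimately show ?thesis using 2 by (auto simp: numeral_3_eq_3)
    next
      case 3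
      then obtain m where m: "n = Suc m" "odd m" using less.prems by (cases n) auto
      have "(x, y) \<in> alt_comp \<beta> G m O G" using xyn m alt_comp_snoc[of \<beta> G m] by simp
      then obtain c where xc: "(x, c) \<in> alt_comp \<beta> G m" and cy: "(c, y) \<in> G" by blast
      have "(x, c) \<in> \<alpha>" using cy GA xya symA transA by blast
      moreover have m1: "1 \<le> m" "m < n" using m by (cases m; auto)+
      ultimately have "(x, c) \<in> alt_comp (\<alpha> \<inter> \<beta>) (\<alpha> \<inter> \<gamma>) m"
        using less.IH[OF m1(2) m1(1)] xc unfolding G_def by blast
      then show ?thesis using m cy alt_comp_snoc[of "\<alpha> \<inter> \<beta>" "\<alpha> \<inter> \<gamma>" m] unfolding G_def by auto
    next
      case 4
      define j where "j = n div 2"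
      define p where "p = (if odd j then j else j + 1)"
      define b where "b = n - p + 1"
      have nj: "n = 2 * j + 1" using 4 j_def by simp
      have pp: "odd p" "3 \<le> p" "p < n" "n - p - 1 \<le> p" "p - 1 \<le> b" "1 \<le> n - p - 1" "odd (n - p - 1)"
        "b < n" "1 \<le> b" "p + b - 1 = n" "1 \<le> n - p" "Suc (n - p) = b" "even (p - 1)" "1 \<le> p - 1"
        using 4 nj unfolding p_def b_def by auto presburger+
      have enp: "n - p = Suc (n - p - 1)" and ep: "p = Suc (p - 1)" and eb: "b = Suc (b - 1)" using pp by auto
      have "alt_comp \<beta> G n = alt_comp \<beta> G p O alt_comp G \<beta> (n - p)"
        using alt_comp_add[of \<beta> G p "n - p"] pp by simp
      also have "alt_comp G \<beta> (n - p) = G O alt_comp \<beta> G (n - p - 1)"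
        using alt_comp_Suc[of G \<beta> "n - p - 1"] enp by metis
      finally have "(x, y) \<in> alt_comp \<beta> G p O G O alt_comp \<beta> G (n - p - 1)" using xyn by simp
      then obtain c w where xc: "(x, c) \<in> alt_comp \<beta> G p" and cw: "(c, w) \<in> G"
        and wy: "(w, y) \<in> alt_comp \<beta> G (n - p - 1)" by blast
      have "alt_comp \<beta> G p = \<beta> O alt_comp G \<beta> (p - 1)"
        using alt_comp_Suc[of \<beta> G "p - 1"] ep by metis
      then obtain a where xa: "(x, a) \<in> \<beta>" and ac: "(a, c) \<in> alt_comp G \<beta> (p - 1)" using xc by blast
      have cC: "c \<in> C" and wC: "w \<in> C" using cw Gsub by auto
      have aC: "a \<in> C" using xa Bsub by auto
      define u where "u = eval A (env4 x c c y) e1"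
      have A1: "alt_comp \<beta> G 1 = \<beta>" by simp
      have mono: "alt_comp \<beta> G k \<subseteq> alt_comp \<beta> G l" if "1 \<le> k" "k \<le> l" for k l
        using alt_comp_mono[OF eB eG that] .
      have p1: "1 \<le> p" using pp by simp
      have Bk: "\<beta> \<subseteq> alt_comp \<beta> G k" if "1 \<le> k" for k
        using mono[of 1 k] that A1 by simp
      have tZ: "tcompat A (alt_comp \<beta> G p) e1"
        using tcompat_alt[OF cb cG w1, of "p - 1"] ep by metis
      have "(c, x) \<in> alt_comp \<beta> G p" using xc Aodd[OF pp(1)] by blast
      moreover have "(c, w) \<in> alt_comp \<beta> G p"
      proof -
        have "(c, w) \<in> alt_comp G \<beta> 1" using cw by simp
        also have "alt_comp G \<beta> 1 \<subseteq> alt_comp \<beta> G 2" using alt_comp_shift[OF eB eG, of 1] by (simp add: numeral_2_eq_2)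
        also have "\<dots> \<subseteq> alt_comp \<beta> G p" using mono[of 2 p] pp by simp
        finally show ?thesis .
      qed
      moreover have "(y, w) \<in> alt_comp \<beta> G p"
        using wy Aodd[OF pp(7)] mono[of "n - p - 1" p] pp by blast
      moreover have "(x, x) \<in> alt_comp \<beta> G p" using reflB[OF xC] Bk[OF p1] by blast
      ultimately have "(u, eval A (env4 x x w w) e1) \<in> alt_comp \<beta> G p"
        unfolding u_def using tcompat_env4[OF tZ] by blast
      then have "(u, x) \<in> alt_comp \<beta> G p" using J2 xC wC unfolding C_def by simp
      then have "(x, u) \<in> alt_comp \<beta> G p" using Aodd[OF pp(1)] by blast
      moreover have ua: "(u, x) \<in> \<alpha>" unfolding u_def using ualpha xya cC by blast
      ultimately have xu: "(x, u) \<in> alt_comp (\<alpha> \<inter> \<beta>) (\<alpha> \<inter> \<gamma>) p"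
        using less.IH[of p] pp symA unfolding G_def by auto
      have u2: "u = eval A (env4 x c c y) e2" unfolding u_def using J3 xC cC yC unfolding C_def by simp
      have tW: "tcompat A (alt_comp \<beta> G b) e2"
        using tcompat_alt[OF cb cG w2, of "b - 1"] eb by metis
      have "(x, a) \<in> alt_comp \<beta> G b" using xa Bk[OF pp(9)] by blast
      moreover have "(c, a) \<in> alt_comp \<beta> G b"
      proof -
        have "(c, a) \<in> (alt_comp G \<beta> (p - 1))\<inverse>" using ac by simp
        also have "(alt_comp G \<beta> (p - 1))\<inverse> = alt_comp \<beta> G (p - 1)"
          using alt_comp_conv[OF symG symB, of "p - 1"] pp by simp
        also have "\<dots> \<subseteq> alt_comp \<beta> G b" using mono[of "p - 1" b] pp by simp
        finally show ?thesis .
      qed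
      moreover have "(c, y) \<in> alt_comp \<beta> G b"
      proof -
        have "(c, y) \<in> G O alt_comp \<beta> G (n - p - 1)" using cw wy by blast
        also have "G O alt_comp \<beta> G (n - p - 1) = alt_comp G \<beta> (n - p)"
          using alt_comp_Suc[of G \<beta> "n - p - 1"] enp by metis
        also have "\<dots> \<subseteq> alt_comp \<beta> G (Suc (n - p))" using alt_comp_shift[OF eB eG pp(11)] .
        finally show ?thesis using pp by simp
      qed
      moreover have "(y, y) \<in> alt_comp \<beta> G b" using reflB[OF yC] Bk[OF pp(9)] by blast
      ultimately have "(u, eval A (env4 a a y y) e2) \<in> alt_comp \<beta> G b"
        unfolding u2 using tcompat_env4[OF tW] by blast
      then have "(u, y) \<in> alt_comp \<beta> G b" using J4 aC yC unfolding C_def by simp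
      moreover have "(u, y) \<in> \<alpha>" using ua xya transA by blast
      ultimately have uy: "(u, y) \<in> alt_comp (\<alpha> \<inter> \<beta>) (\<alpha> \<inter> \<gamma>) b"
        using less.IH[of b] pp unfolding G_def by auto
      have "(x, y) \<in> alt_comp (\<alpha> \<inter> \<beta>) (\<alpha> \<inter> \<gamma>) p O alt_comp (\<alpha> \<inter> \<beta>) (\<alpha> \<inter> \<gamma>) b"
        using xu uy by blast
      also have "\<dots> = alt_comp (\<alpha> \<inter> \<beta>) (\<alpha> \<inter> \<gamma>) (p + b - 1)"
        using alt_comp_merge_odd[OF eAB] pp by simp
      finally show ?thesis using pp by simp
    qed
  qed
qed



lemma alt_half:
  assumes eB: "equiv C B" and eG: "equiv C G" and k: "1 \<le> k"
  shows "alt_comp B G (2 * k - 1) = alt_comp B G k O (alt_comp B G k)\<inverse>"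
proof -
  have sB: "sym B" and sG: "sym G" using eB eG by (auto simp: equiv_def)
  show ?thesis
  proof (cases "odd k")
    case True
    then have "(alt_comp B G k)\<inverse> = alt_comp B G k" using alt_comp_conv[OF sB sG, of k] by simp
    moreover have "alt_comp B G k O alt_comp B G k = alt_comp B G (k + k - 1)"
      using alt_comp_merge_odd[OF eB True k] .
    ultimately show ?thesis by (simp add: mult_2)
  next
    case False
    then have "(alt_comp B G k)\<inverse> = alt_comp G B k" using alt_comp_conv[OF sB sG, of k] by simp
    moreover have "alt_comp B G k O alt_comp G B k = alt_comp B G (k + k - 1)"
      using alt_comp_merge_even[OF eG _ k k] False by simp
    ultimately show ?thesis by (simp add: mult_2)
  qed
qed

lemma single_ii:
  fixes A :: "('f, 'a) alg"
  assumes alg: "is_alg ar A"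
    and ca: "congruence ar A \<alpha>" and cb: "congruence ar A \<beta>" and cg: "congruence ar A \<gamma>"
    and w1: "wf_trm ar e1" and w2: "wf_trm ar e2" and w3: "wf_trm ar e3"
    and I1a: "\<And>a b. a \<in> carr A \<Longrightarrow> b \<in> carr A \<Longrightarrow> eval A (env4 a b b a) e1 = a"
    and I1b: "\<And>a b. a \<in> carr A \<Longrightarrow> b \<in> carr A \<Longrightarrow> eval A (env4 a b b a) e2 = a"
    and I1c: "\<And>a b. a \<in> carr A \<Longrightarrow> b \<in> carr A \<Longrightarrow> eval A (env4 a b b a) e3 = a"
    and I2: "\<And>a c. a \<in> carr A \<Longrightarrow> c \<in> carr A \<Longrightarrow> eval A (env4 a a c c) e1 = a"
    and I3: "\<And>a b d. a \<in> carr A \<Longrightarrow> b \<in> carr A \<Longrightarrow> d \<in> carr A \<Longrightarrow>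
               eval A (env4 a b b d) e1 = eval A (env4 a b b d) e2"
    and I4: "\<And>a c. a \<in> carr A \<Longrightarrow> c \<in> carr A \<Longrightarrow> eval A (env4 a a c c) e2 = eval A (env4 a a c c) e3"
    and I5: "\<And>a b d. a \<in> carr A \<Longrightarrow> b \<in> carr A \<Longrightarrow> d \<in> carr A \<Longrightarrow> eval A (env4 a b b d) e3 = d"
  shows "\<alpha> \<inter> alt_comp \<beta> (\<alpha> \<inter> \<gamma>) (2 ^ Suc q - 1) \<subseteq> alt_comp (\<alpha> \<inter> \<beta>) (\<alpha> \<inter> \<gamma>) (2 ^ Suc q)"
proof -
  define G where "G = \<alpha> \<inter> \<gamma>"
  define C where "C = carr A"
  define AB where "AB = alt_comp (\<alpha> \<inter> \<beta>) G"
  have cG: "congruence ar A G" unfolding G_def using congruence_Int[OF ca cg] .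
  have cAB: "congruence ar A (\<alpha> \<inter> \<beta>)" using congruence_Int[OF ca cb] .
  have eB: "equiv C \<beta>" and eG: "equiv C G" and eA: "equiv C \<alpha>" and eAB: "equiv C (\<alpha> \<inter> \<beta>)"
    and eGa: "equiv C \<gamma>"
    using cong_equiv cG cAB ca cb cg unfolding C_def by auto
  have symB: "sym \<beta>" and symG: "sym G" using eB eG by (auto simp: equiv_def)
  have Bsub: "\<beta> \<subseteq> C \<times> C" and Gsub: "G \<subseteq> C \<times> C" and Asub: "\<alpha> \<subseteq> C \<times> C"
    using eB eG eA by (auto simp: equiv_def refl_on_def)
  have reflB: "(c, c) \<in> \<beta>" and reflA: "(c, c) \<in> \<alpha>" and reflGa: "(c, c) \<in> \<gamma>" and reflG: "(c, c) \<in> G"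
    if "c \<in> C" for c
    using that eB eA eGa eG by (auto simp: equiv_def refl_on_def)
  have symA: "(a, b) \<in> \<alpha> \<Longrightarrow> (b, a) \<in> \<alpha>" and symB': "(a, b) \<in> \<beta> \<Longrightarrow> (b, a) \<in> \<beta>"
    and symGa: "(a, b) \<in> \<gamma> \<Longrightarrow> (b, a) \<in> \<gamma>" for a b
    using eA eB eGa by (auto simp: equiv_def sym_def)
  have transA: "(a, b) \<in> \<alpha> \<Longrightarrow> (b, c) \<in> \<alpha> \<Longrightarrow> (a, c) \<in> \<alpha>"
    and transGa: "(a, b) \<in> \<gamma> \<Longrightarrow> (b, c) \<in> \<gamma> \<Longrightarrow> (a, c) \<in> \<gamma>" for a b c
    using eA eGa by (auto simp: equiv_def trans_def)
  have GA: "G \<subseteq> \<alpha>" unfolding G_def by auto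
  have tA: "tcompat A \<alpha> e1" "tcompat A \<alpha> e2" "tcompat A \<alpha> e3" using tcompat_cong ca w1 w2 w3 by auto
  have tGa: "tcompat A \<gamma> e1" "tcompat A \<gamma> e2" "tcompat A \<gamma> e3" using tcompat_cong cg w1 w2 w3 by auto
  have Aodd: "(alt_comp \<beta> G k)\<inverse> = alt_comp \<beta> G k" if "odd k" for k
    using alt_comp_conv[OF symB symG, of k] that by simp
  have tK: "tcompat A (alt_comp \<beta> G k) e" if "1 \<le> k" "wf_trm ar e" for k e
  proof -
    have "k = Suc (k - 1)" using that by simp
    then show ?thesis using tcompat_alt[OF cb cG that(2), of "k - 1"] by metis
  qed
  have Bk: "\<beta> \<subseteq> alt_comp \<beta> G k" if "1 \<le> k" for k
    using alt_comp_mono[OF eB eG, of 1 k] that by simp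
  have ualpha: "(eval A (env4 x c d y) e, x) \<in> \<alpha>"
    if "(x, y) \<in> \<alpha>" "(c, d) \<in> G" "tcompat A \<alpha> e"
       "\<And>a b. a \<in> carr A \<Longrightarrow> b \<in> carr A \<Longrightarrow> eval A (env4 a b b a) e = a" for x y c d e
  proof -
    have xC: "x \<in> C" and cC: "c \<in> C" using that(1,2) Asub Gsub by auto
    have "(d, c) \<in> \<alpha>" using that(2) GA symA by blast
    then have "(eval A (env4 x c d y) e, eval A (env4 x c c x) e) \<in> \<alpha>"
      using tcompat_env4[OF that(3)] reflA xC cC that(1) symA by blast
    then show ?thesis using that(4) xC cC unfolding C_def by simp
  qed
  show ?thesis
  proof (induction q)
    case 0
    show ?case
    proof (rule subrelI)
      fix x y assume "(x, y) \<in> \<alpha> \<inter> alt_comp \<beta> (\<alpha> \<inter> \<gamma>) (2 ^ Suc 0 - 1)"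
      then have xy: "(x, y) \<in> \<alpha> \<inter> \<beta>" by simp
      then have "y \<in> C" using Asub by auto
      then have "(y, y) \<in> \<alpha> \<inter> \<gamma>" using reflG unfolding G_def by blast
      then show "(x, y) \<in> alt_comp (\<alpha> \<inter> \<beta>) (\<alpha> \<inter> \<gamma>) (2 ^ Suc 0)" using xy by (auto simp: numeral_2_eq_2)
    qed
  next
    case (Suc q)
    define k where "k = (2::nat) ^ q"
    define n where "n = 2 * k - 1"
    have k1: "1 \<le> k" unfolding k_def by simp
    have nn: "odd n" "1 \<le> n" "2 ^ Suc q - 1 = n" "2 ^ Suc (Suc q) - 1 = n + (n + 1)"
      "2 ^ Suc (Suc q) = (n + 1) + (n + 1)" "even (n + 1)" "n + 1 = Suc n" "2 ^ Suc q = n + 1"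
    proof -
      have pw: "2 ^ Suc q = 2 * k" "2 ^ Suc (Suc q) = 4 * k" by (simp_all add: k_def)
      show "odd n" "1 \<le> n" "2 ^ Suc q - 1 = n" "2 ^ Suc (Suc q) - 1 = n + (n + 1)"
        "2 ^ Suc (Suc q) = (n + 1) + (n + 1)" "even (n + 1)" "n + 1 = Suc n" "2 ^ Suc q = n + 1"
        unfolding pw n_def using k1 by presburger+
    qed
    have IH: "\<alpha> \<inter> alt_comp \<beta> G n \<subseteq> AB (n + 1)"
      using Suc.IH unfolding nn(8) AB_def G_def by simp
    have ABG: "AB (n + 1) O G = AB (n + 1)"
    proof -
      have "AB (n + 1) = AB n O G" unfolding AB_def using alt_comp_snoc[of "\<alpha> \<inter> \<beta>" G n] nn(1) by simp
      moreover have "G O G = G" using equiv_OO[OF eG] .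
      ultimately show ?thesis by (simp add: O_assoc)
    qed
    have ABAB: "AB (n + 1) O AB (n + 1) = AB ((n + 1) + (n + 1))"
      unfolding AB_def using alt_comp_add[of "\<alpha> \<inter> \<beta>" G "n + 1" "n + 1"] nn(6) by simp
    show ?case
    proof (rule subrelI)
      fix x y assume "(x, y) \<in> \<alpha> \<inter> alt_comp \<beta> (\<alpha> \<inter> \<gamma>) (2 ^ Suc (Suc q) - 1)"
      then have xya: "(x, y) \<in> \<alpha>" and xyn: "(x, y) \<in> alt_comp \<beta> G (n + (n + 1))"
        unfolding nn(4) G_def by auto
      have xC: "x \<in> C" and yC: "y \<in> C" using xya Asub by auto
      have "alt_comp \<beta> G (n + (n + 1)) = alt_comp \<beta> G n O alt_comp G \<beta> (Suc n)"
        using alt_comp_add[of \<beta> G n "n + 1"] nn(1) by simp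
      also have "\<dots> = alt_comp \<beta> G n O G O alt_comp \<beta> G n" by (simp add: alt_comp_Suc O_assoc)
      finally obtain c d where xc: "(x, c) \<in> alt_comp \<beta> G n" and cd: "(c, d) \<in> G"
        and dy: "(d, y) \<in> alt_comp \<beta> G n" using xyn by blast
      have cC: "c \<in> C" and dC: "d \<in> C" using cd Gsub by auto
      have half: "alt_comp \<beta> G n = alt_comp \<beta> G k O (alt_comp \<beta> G k)\<inverse>"
        unfolding n_def using alt_half[OF eB eG k1] .
      obtain a where xa: "(x, a) \<in> alt_comp \<beta> G k" and ca': "(c, a) \<in> alt_comp \<beta> G k"
        using xc half by blast
      obtain w where dw: "(d, w) \<in> alt_comp \<beta> G k" and yw: "(y, w) \<in> alt_comp \<beta> G k"
        using dy half by blast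
      have aC: "a \<in> C" and wC: "w \<in> C" using alt_comp_sub[OF eB eG, of "k - 1"] xa dw k1 by auto
      define u1 where "u1 = eval A (env4 x c d y) e1"
      define u2 where "u2 = eval A (env4 x c d y) e2"
      define u3 where "u3 = eval A (env4 x c d y) e3"
      have u1a: "(u1, x) \<in> \<alpha>" unfolding u1_def using ualpha[OF xya cd tA(1)] I1a by blast
      have u2a: "(u2, x) \<in> \<alpha>" unfolding u2_def using ualpha[OF xya cd tA(2)] I1b by blast
      have u3a: "(u3, x) \<in> \<alpha>" unfolding u3_def using ualpha[OF xya cd tA(3)] I1c by blast
      have cdg: "(d, c) \<in> \<gamma>" using cd symGa unfolding G_def by blast
      have "(u1, eval A (env4 x x d d) e1) \<in> alt_comp \<beta> G n"
        unfolding u1_def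
        by (rule tcompat_env4[OF tK[OF nn(2) w1]])
           (use reflB[OF xC] reflB[OF dC] Bk[OF nn(2)] xc dy Aodd[OF nn(1)] in blast)+
      then have "(u1, x) \<in> alt_comp \<beta> G n" using I2 xC dC unfolding C_def by simp
      then have "(x, u1) \<in> \<alpha> \<inter> alt_comp \<beta> G n" using Aodd[OF nn(1)] u1a symA by blast
      then have xu1: "(x, u1) \<in> AB (n + 1)" using IH by blast
      have "(u1, eval A (env4 x c c y) e1) \<in> \<gamma>"
        unfolding u1_def using tcompat_env4[OF tGa(1)] reflGa xC cC yC cdg by blast
      moreover have "(eval A (env4 x c c y) e2, u2) \<in> \<gamma>"
        unfolding u2_def using tcompat_env4[OF tGa(2)] reflGa xC cC yC cdg symGa by blast
      ultimately have "(u1, u2) \<in> \<gamma>" using I3 xC cC yC transGa unfolding C_def by metis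
      then have u12: "(u1, u2) \<in> G" using u1a u2a symA transA unfolding G_def by blast
      have "(u2, eval A (env4 a a w w) e2) \<in> alt_comp \<beta> G k"
        unfolding u2_def using tcompat_env4[OF tK[OF k1 w2] xa ca' dw yw] .
      moreover have "(u3, eval A (env4 a a w w) e3) \<in> alt_comp \<beta> G k"
        unfolding u3_def using tcompat_env4[OF tK[OF k1 w3] xa ca' dw yw] .
      ultimately have "(u2, u3) \<in> alt_comp \<beta> G n" using I4 aC wC half unfolding C_def by auto
      moreover have "(u2, u3) \<in> \<alpha>" using u2a u3a symA transA by blast
      ultimately have u23: "(u2, u3) \<in> AB (n + 1)" using IH by blast
      have "(u3, eval A (env4 x c c y) e3) \<in> \<gamma>"
        unfolding u3_def using tcompat_env4[OF tGa(3)] reflGa xC cC yC cdg by blast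
      then have "(u3, y) \<in> \<gamma>" using I5 xC cC yC unfolding C_def by simp
      moreover have "(u3, y) \<in> \<alpha>" using u3a xya transA by blast
      ultimately have u3y: "(u3, y) \<in> G" unfolding G_def by blast
      have "(x, u2) \<in> AB (n + 1)" using xu1 u12 ABG by blast
      moreover have "(u2, y) \<in> AB (n + 1)" using u23 u3y ABG by blast
      ultimately have "(x, y) \<in> AB ((n + 1) + (n + 1))" using ABAB by blast
      then show "(x, y) \<in> alt_comp (\<alpha> \<inter> \<beta>) (\<alpha> \<inter> \<gamma>) (2 ^ Suc (Suc q))"
        unfolding nn(5) AB_def G_def .
    qed
  qed
qed



fun tsubst :: "('v \<Rightarrow> ('f, 'w) trm) \<Rightarrow> ('f, 'v) trm \<Rightarrow> ('f, 'w) trm" where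
  "tsubst \<sigma> (Var v) = \<sigma> v"
| "tsubst \<sigma> (Fun f ts) = Fun f (map (tsubst \<sigma>) ts)"

definition ren :: "(nat \<Rightarrow> nat) \<Rightarrow> ('f, nat) trm \<Rightarrow> ('f, nat) trm" where
  "ren g = tsubst (\<lambda>v. Var (g v))"

lemma eval_tsubst: "eval A \<rho> (tsubst \<sigma> t) = eval A (\<lambda>v. eval A \<rho> (\<sigma> v)) t"
  by (induction t) (simp_all cong: map_cong)

lemma eval_ren: "eval A \<rho> (ren g t) = eval A (\<lambda>v. \<rho> (g v)) t"
  unfolding ren_def by (simp add: eval_tsubst)

lemma ren_Fun: "ren g (Fun f ts) = Fun f (map (ren g) ts)"
  unfolding ren_def by simp

lemma ren_Var: "ren g (Var v) = Var (g v)"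
  unfolding ren_def by simp

lemma wf_tsubst: "wf_trm ar t \<Longrightarrow> (\<forall>v. wf_trm ar (\<sigma> v)) \<Longrightarrow> wf_trm ar (tsubst \<sigma> t)"
  by (induction t) auto

definition semeq :: "('f \<Rightarrow> nat) \<Rightarrow> (('f, nat) trm \<times> ('f, nat) trm) set \<Rightarrow> 'a itself
    \<Rightarrow> ('f, nat) trm \<Rightarrow> ('f, nat) trm \<Rightarrow> bool" where
  "semeq ar E T s t \<longleftrightarrow> (\<forall>A :: ('f, 'a) alg. model ar E A \<longrightarrow>
      (\<forall>\<rho>. (\<forall>v. \<rho> v \<in> carr A) \<longrightarrow> eval A \<rho> s = eval A \<rho> t))"

lemma semeq_refl:
  fixes ar :: "'f \<Rightarrow> nat" and E :: "(('f, nat) trm \<times> ('f, nat) trm) set" and T :: "'a itself"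
  shows "semeq ar E T s s" unfolding semeq_def by simp
lemma semeq_sym:
  fixes ar :: "'f \<Rightarrow> nat" and E :: "(('f, nat) trm \<times> ('f, nat) trm) set" and T :: "'a itself"
  shows "semeq ar E T s t \<Longrightarrow> semeq ar E T t s" unfolding semeq_def by auto
lemma semeq_trans:
  fixes ar :: "'f \<Rightarrow> nat" and E :: "(('f, nat) trm \<times> ('f, nat) trm) set" and T :: "'a itself"
  shows "semeq ar E T s t \<Longrightarrow> semeq ar E T t u \<Longrightarrow> semeq ar E T s u"
  unfolding semeq_def by auto

lemma semeq_ren:
  fixes ar :: "'f \<Rightarrow> nat" and E :: "(('f, nat) trm \<times> ('f, nat) trm) set" and T :: "'a itself"
  shows "semeq ar E T s t \<Longrightarrow> semeq ar E T (ren g s) (ren g t)"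
  unfolding semeq_def eval_ren by simp

lemma semeq_Fun:
  fixes ar :: "'f \<Rightarrow> nat" and E :: "(('f, nat) trm \<times> ('f, nat) trm) set" and T :: "'a itself"
  assumes "list_all2 (semeq ar E T) xs ys"
  shows "semeq ar E T (Fun f xs) (Fun f ys)"
  unfolding semeq_def
proof (intro allI impI)
  fix A :: "('f, 'a) alg" and \<rho> :: "nat \<Rightarrow> 'a"
  assume m: "model ar E A" and r: "\<forall>v. \<rho> v \<in> carr A"
  have "map (eval A \<rho>) xs = map (eval A \<rho>) ys"
    using assms m r unfolding semeq_def
    by (induction xs ys rule: list_all2_induct) auto
  then show "eval A \<rho> (Fun f xs) = eval A \<rho> (Fun f ys)" by simp
qed

lemma semeq_tsubst:
  fixes ar :: "'f \<Rightarrow> nat" and E :: "(('f, nat) trm \<times> ('f, nat) trm) set" and T :: "'a itself"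
  assumes "semeq ar E T s t" "\<forall>v. wf_trm ar (\<sigma> v)"
  shows "semeq ar E T (tsubst \<sigma> s) (tsubst \<sigma> t)"
  unfolding semeq_def
proof (intro allI impI)
  fix A :: "('f, 'a) alg" and \<rho> :: "nat \<Rightarrow> 'a"
  assume m: "model ar E A" and r: "\<forall>v. \<rho> v \<in> carr A"
  have "\<forall>v. eval A \<rho> (\<sigma> v) \<in> carr A"
    using eval_closed[of ar A \<rho>] m r assms(2) unfolding model_def by blast
  note cl = this
  from assms(1) m have "\<forall>\<rho>. (\<forall>v. \<rho> v \<in> carr A) \<longrightarrow> eval A \<rho> s = eval A \<rho> t"
    unfolding semeq_def by blast
  then have "(\<forall>v. (\<lambda>v. eval A \<rho> (\<sigma> v)) v \<in> carr A) \<longrightarrow>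
      eval A (\<lambda>v. eval A \<rho> (\<sigma> v)) s = eval A (\<lambda>v. eval A \<rho> (\<sigma> v)) t" by (rule spec)
  then show "eval A \<rho> (tsubst \<sigma> s) = eval A \<rho> (tsubst \<sigma> t)"
    using cl unfolding eval_tsubst by simp
qed

definition frep :: "('f \<Rightarrow> nat) \<Rightarrow> (('f, nat) trm \<times> ('f, nat) trm) set \<Rightarrow> 'a itself
    \<Rightarrow> ('f, nat) trm \<Rightarrow> ('f, nat) trm" where
  "frep ar E T t = (SOME s. wf_trm ar s \<and> semeq ar E T s t)"

definition FA :: "('f \<Rightarrow> nat) \<Rightarrow> (('f, nat) trm \<times> ('f, nat) trm) set \<Rightarrow> 'a itself
    \<Rightarrow> ('f, ('f, nat) trm) alg" where
  "FA ar E T = \<lparr>carr = frep ar E T ` {t. wf_trm ar t}, ops = (\<lambda>f ts. frep ar E T (Fun f ts))\<rparr>"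

lemma frep:
  fixes ar :: "'f \<Rightarrow> nat" and E :: "(('f, nat) trm \<times> ('f, nat) trm) set" and T :: "'a itself"
  shows "wf_trm ar t \<Longrightarrow> wf_trm ar (frep ar E T t) \<and> semeq ar E T (frep ar E T t) t"
  unfolding frep_def by (rule someI[of _ t]) (simp add: semeq_refl)

lemma frep_eq:
  fixes ar :: "'f \<Rightarrow> nat" and E :: "(('f, nat) trm \<times> ('f, nat) trm) set" and T :: "'a itself"
  shows "semeq ar E T s t \<Longrightarrow> frep ar E T s = frep ar E T t"
proof -
  assume st: "semeq ar E T s t"
  have "wf_trm ar u \<and> semeq ar E T u s \<longleftrightarrow> wf_trm ar u \<and> semeq ar E T u t" for u
    using st semeq_trans[of ar E T u s t] semeq_trans[of ar E T u t s] semeq_sym[OF st] by blast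
  then show ?thesis unfolding frep_def by simp
qed

lemma FA_carr:
  fixes ar :: "'f \<Rightarrow> nat" and E :: "(('f, nat) trm \<times> ('f, nat) trm) set" and T :: "'a itself"
  shows "s \<in> carr (FA ar E T) \<Longrightarrow> wf_trm ar s \<and> frep ar E T s = s"
proof -
  assume "s \<in> carr (FA ar E T)"
  then obtain t where t: "wf_trm ar t" "s = frep ar E T t" unfolding FA_def by auto
  then show ?thesis using frep[OF t(1), of E T] frep_eq by metis
qed

lemma FA_carr_eq:
  fixes ar :: "'f \<Rightarrow> nat" and E :: "(('f, nat) trm \<times> ('f, nat) trm) set" and T :: "'a itself"
  shows "s \<in> carr (FA ar E T) \<Longrightarrow> t \<in> carr (FA ar E T) \<Longrightarrow> semeq ar E T s t \<Longrightarrow> s = t"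
  using FA_carr frep_eq by metis

lemma FA_in:
  fixes ar :: "'f \<Rightarrow> nat" and E :: "(('f, nat) trm \<times> ('f, nat) trm) set" and T :: "'a itself"
  shows "wf_trm ar t \<Longrightarrow> frep ar E T t \<in> carr (FA ar E T)"
  unfolding FA_def by simp

lemma FA_alg:
  fixes ar :: "'f \<Rightarrow> nat" and E :: "(('f, nat) trm \<times> ('f, nat) trm) set" and T :: "'a itself"
  shows "is_alg ar (FA ar E T)"
  unfolding is_alg_def
proof (intro conjI allI impI)
  show "carr (FA ar E T) \<noteq> {}" using FA_in[of ar "Var 0" E T] by auto
next
  fix f xs assume h: "length xs = ar f \<and> set xs \<subseteq> carr (FA ar E T)"
  then have "\<forall>x\<in>set xs. wf_trm ar x" using FA_carr by blast
  then have "wf_trm ar (Fun f xs)" using h by auto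
  then show "ops (FA ar E T) f xs \<in> carr (FA ar E T)" using FA_in by (simp add: FA_def)
qed

lemma eval_FA:
  fixes ar :: "'f \<Rightarrow> nat" and E :: "(('f, nat) trm \<times> ('f, nat) trm) set" and T :: "'a itself"
  assumes "wf_trm ar u" "\<forall>v. \<rho> v \<in> carr (FA ar E T)"
  shows "eval (FA ar E T) \<rho> u \<in> carr (FA ar E T) \<and> semeq ar E T (eval (FA ar E T) \<rho> u) (tsubst \<rho> u)"
  using assms(1)
proof (induction u)
  case (Var v) then show ?case using assms(2) by (simp add: semeq_refl)
next
  case (Fun f ts)
  have l: "length ts = ar f" and w: "\<forall>t\<in>set ts. wf_trm ar t" using Fun.prems by auto
  let ?xs = "map (eval (FA ar E T) \<rho>) ts"
  have in1: "\<forall>x\<in>set ?xs. x \<in> carr (FA ar E T)" using Fun.IH w by auto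
  have "\<forall>x\<in>set ?xs. wf_trm ar x" using in1 FA_carr by blast
  then have wf1: "wf_trm ar (Fun f ?xs)" using l by simp
  have ev: "eval (FA ar E T) \<rho> (Fun f ts) = frep ar E T (Fun f ?xs)" by (simp add: FA_def)
  have "list_all2 (semeq ar E T) ?xs (map (tsubst \<rho>) ts)"
    using Fun.IH w by (auto simp: list_all2_conv_all_nth)
  then have s1: "semeq ar E T (Fun f ?xs) (tsubst \<rho> (Fun f ts))" using semeq_Fun by simp
  have s2: "semeq ar E T (frep ar E T (Fun f ?xs)) (Fun f ?xs)" using frep[OF wf1, of E T] by simp
  show ?case unfolding ev using FA_in[OF wf1] semeq_trans[OF s2 s1] by simp
qed

lemma FA_model:
  fixes ar :: "'f \<Rightarrow> nat" and E :: "(('f, nat) trm \<times> ('f, nat) trm) set" and T :: "'a itself"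
  assumes "identities ar E"
  shows "model ar E (FA ar E T)"
  unfolding model_def
proof (intro conjI FA_alg ballI)
  fix p assume pE: "p \<in> E"
  obtain s t where p: "p = (s, t)" by (cases p)
  have ws: "wf_trm ar s" and wt: "wf_trm ar t" using assms pE p unfolding identities_def by auto
  have st: "semeq ar E T s t" using pE p unfolding semeq_def model_def by blast
  have "\<forall>\<rho>. (\<forall>v. \<rho> v \<in> carr (FA ar E T)) \<longrightarrow> eval (FA ar E T) \<rho> s = eval (FA ar E T) \<rho> t"
  proof (intro allI impI)
    fix \<rho> :: "nat \<Rightarrow> ('f, nat) trm" assume r: "\<forall>v. \<rho> v \<in> carr (FA ar E T)"
    have wr: "\<forall>v. wf_trm ar (\<rho> v)" using r FA_carr by blast
    have s1: "semeq ar E T (tsubst \<rho> s) (tsubst \<rho> t)" using semeq_tsubst[OF st wr] .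
    have e1: "eval (FA ar E T) \<rho> s \<in> carr (FA ar E T)"
      and s2: "semeq ar E T (eval (FA ar E T) \<rho> s) (tsubst \<rho> s)" using eval_FA[OF ws r] by auto
    have e2: "eval (FA ar E T) \<rho> t \<in> carr (FA ar E T)"
      and s3: "semeq ar E T (eval (FA ar E T) \<rho> t) (tsubst \<rho> t)" using eval_FA[OF wt r] by auto
    have "semeq ar E T (eval (FA ar E T) \<rho> s) (eval (FA ar E T) \<rho> t)"
      using semeq_trans[OF semeq_trans[OF s2 s1] semeq_sym[OF s3]] .
    then show "eval (FA ar E T) \<rho> s = eval (FA ar E T) \<rho> t" using FA_carr_eq[OF e1 e2] by simp
  qed
  then show "case p of (s, t) \<Rightarrow> \<forall>\<rho>. (\<forall>v. \<rho> v \<in> carr (FA ar E T)) \<longrightarrow> eval (FA ar E T) \<rho> s = eval (FA ar E T) \<rho> t"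
    using p by simp
qed

definition kern :: "('f \<Rightarrow> nat) \<Rightarrow> (('f, nat) trm \<times> ('f, nat) trm) set \<Rightarrow> 'a itself
    \<Rightarrow> (nat \<Rightarrow> nat) \<Rightarrow> ('f, nat) trm rel" where
  "kern ar E T g = {(s, t). s \<in> carr (FA ar E T) \<and> t \<in> carr (FA ar E T) \<and> semeq ar E T (ren g s) (ren g t)}"

lemma kern_cong:
  fixes ar :: "'f \<Rightarrow> nat" and E :: "(('f, nat) trm \<times> ('f, nat) trm) set" and T :: "'a itself"
  shows "congruence ar (FA ar E T) (kern ar E T g)"
  unfolding congruence_def
proof (intro conjI allI impI)
  show "equiv (carr (FA ar E T)) (kern ar E T g)"
    unfolding equiv_def refl_on_def sym_def trans_def kern_def
    using semeq_refl semeq_sym semeq_trans by blast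
next
  fix f xs ys
  assume h: "length xs = ar f \<and> length ys = ar f \<and> list_all2 (\<lambda>x y. (x, y) \<in> kern ar E T g) xs ys"
  then have inx: "set xs \<subseteq> carr (FA ar E T)" and iny: "set ys \<subseteq> carr (FA ar E T)"
    unfolding kern_def by (auto simp: list_all2_conv_all_nth in_set_conv_nth)
  have "\<forall>x\<in>set xs. wf_trm ar x" "\<forall>x\<in>set ys. wf_trm ar x" using inx iny FA_carr by blast+
  then have wx: "wf_trm ar (Fun f xs)" and wy: "wf_trm ar (Fun f ys)" using h by auto
  have "list_all2 (semeq ar E T) (map (ren g) xs) (map (ren g) ys)"
    using h unfolding kern_def by (auto simp: list_all2_conv_all_nth)
  then have s1: "semeq ar E T (ren g (Fun f xs)) (ren g (Fun f ys))"
    unfolding ren_Fun by (rule semeq_Fun)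
  have "semeq ar E T (frep ar E T (Fun f xs)) (Fun f xs)" using frep[OF wx, of E T] by simp
  then have s2: "semeq ar E T (ren g (frep ar E T (Fun f xs))) (ren g (Fun f xs))" by (rule semeq_ren)
  have "semeq ar E T (frep ar E T (Fun f ys)) (Fun f ys)" using frep[OF wy, of E T] by simp
  then have s3: "semeq ar E T (ren g (frep ar E T (Fun f ys))) (ren g (Fun f ys))" by (rule semeq_ren)
  have "semeq ar E T (ren g (frep ar E T (Fun f xs))) (ren g (frep ar E T (Fun f ys)))"
    using semeq_trans[OF s2 semeq_trans[OF s1 semeq_sym[OF s3]]] .
  then show "(ops (FA ar E T) f xs, ops (FA ar E T) f ys) \<in> kern ar E T g"
    unfolding kern_def using FA_in[OF wx, of E T] FA_in[OF wy, of E T] by (simp add: FA_def)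
qed

lemma frep_var_ren:
  fixes ar :: "'f \<Rightarrow> nat" and E :: "(('f, nat) trm \<times> ('f, nat) trm) set" and T :: "'a itself"
  shows "semeq ar E T (ren g (frep ar E T (Var i))) (Var (g i))"
proof -
  have "semeq ar E T (frep ar E T (Var i)) (Var i)" using frep[of ar "Var i" E T] by simp
  then have "semeq ar E T (ren g (frep ar E T (Var i))) (ren g (Var i))" by (rule semeq_ren)
  then show ?thesis by (simp add: ren_Var)
qed

lemma kern_vars:
  fixes ar :: "'f \<Rightarrow> nat" and E :: "(('f, nat) trm \<times> ('f, nat) trm) set" and T :: "'a itself"
  assumes "g i = g j"
  shows "(frep ar E T (Var i), frep ar E T (Var j)) \<in> kern ar E T g"
proof -
  have "semeq ar E T (ren g (frep ar E T (Var i))) (ren g (frep ar E T (Var j)))"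
    using frep_var_ren[of ar E T g i] frep_var_ren[of ar E T g j] assms semeq_trans semeq_sym by metis
  then show ?thesis unfolding kern_def using FA_in[of ar "Var i" E T] FA_in[of ar "Var j" E T] by simp
qed

lemma kern_var_l:
  fixes ar :: "'f \<Rightarrow> nat" and E :: "(('f, nat) trm \<times> ('f, nat) trm) set" and T :: "'a itself"
  assumes "(frep ar E T (Var i), e) \<in> kern ar E T g"
  shows "semeq ar E T (ren g e) (Var (g i))"
proof -
  have "semeq ar E T (ren g (frep ar E T (Var i))) (ren g e)" using assms unfolding kern_def by simp
  then show ?thesis using frep_var_ren[of ar E T g i] semeq_trans semeq_sym by metis
qed

lemma kern_var_r:
  fixes ar :: "'f \<Rightarrow> nat" and E :: "(('f, nat) trm \<times> ('f, nat) trm) set" and T :: "'a itself"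
  assumes "(e, frep ar E T (Var i)) \<in> kern ar E T g"
  shows "semeq ar E T (ren g e) (Var (g i))"
proof -
  have "semeq ar E T (ren g e) (ren g (frep ar E T (Var i)))" using assms unfolding kern_def by simp
  then show ?thesis using frep_var_ren[of ar E T g i] semeq_trans semeq_sym by metis
qed

lemma kern_wf:
  fixes ar :: "'f \<Rightarrow> nat" and E :: "(('f, nat) trm \<times> ('f, nat) trm) set" and T :: "'a itself"
  shows "(s, t) \<in> kern ar E T g \<Longrightarrow> wf_trm ar s \<and> wf_trm ar t"
  unfolding kern_def using FA_carr by blast

lemma kern_semeq:
  fixes ar :: "'f \<Rightarrow> nat" and E :: "(('f, nat) trm \<times> ('f, nat) trm) set" and T :: "'a itself"
  shows "(s, t) \<in> kern ar E T g \<Longrightarrow> semeq ar E T (ren g s) (ren g t)"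
  unfolding kern_def by blast

definition gA :: "nat \<Rightarrow> nat" where "gA v = (if v = 0 then 0 else if v \<le> 2 then 1 else 0)"
definition gB :: "nat \<Rightarrow> nat" where "gB v = (if v \<le> 1 then 0 else 2)"
definition gC :: "nat \<Rightarrow> nat" where "gC v = (if v = 0 then 0 else if v \<le> 2 then 1 else 3)"

lemma env_gA: "(\<lambda>v. env4 a b c d (gA v)) = env4 a b b a" by (rule ext) (simp add: env4_def gA_def)
lemma env_gB: "(\<lambda>v. env4 a b c d (gB v)) = env4 a a c c" by (rule ext) (simp add: env4_def gB_def)
lemma env_gC: "(\<lambda>v. env4 a b c d (gC v)) = env4 a b b d" by (rule ext) (simp add: env4_def gC_def)

lemma semeq_apply:
  fixes A :: "('f, 'a) alg"
  assumes "semeq ar E (TYPE('a)) s t" "model ar E A" "a \<in> carr A" "b \<in> carr A" "c \<in> carr A" "d \<in> carr A"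
  shows "eval A (env4 a b c d) s = eval A (env4 a b c d) t"
  using assms env4_carr[of a "carr A" b c d] unfolding semeq_def by blast



lemma semeq_g:
  fixes A :: "('f, 'a) alg"
  assumes "semeq ar E (TYPE('a)) (ren g s) u" "model ar E A" "\<forall>v. \<rho> v \<in> carr A"
  shows "eval A (\<lambda>v. \<rho> (g v)) s = eval A \<rho> u"
  using assms unfolding semeq_def eval_ren[symmetric] by blast

lemma extract3:
  fixes ar :: "'f \<Rightarrow> nat" and E :: "(('f, nat) trm \<times> ('f, nat) trm) set" and T :: "'a itself"
  assumes idE: "identities ar E"
    and H: "\<forall>A :: ('f, ('f, nat) trm) alg. model ar E A \<longrightarrow> mk_modular_alg ar A 3 3"
  shows "\<exists>e1 e2. wf_trm ar e1 \<and> wf_trm ar e2 \<and> semeq ar E T (ren gA e1) (Var 0)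
    \<and> semeq ar E T (ren gA e2) (Var 0) \<and> semeq ar E T (ren gB e1) (Var 0)
    \<and> semeq ar E T (ren gC e1) (ren gC e2) \<and> semeq ar E T (ren gB e2) (Var 2)"
proof -
  define K where "K = kern ar E T"
  define x where "x = frep ar E T (Var 0)"
  define y where "y = frep ar E T (Var 1)"
  define z where "z = frep ar E T (Var 2)"
  define w where "w = frep ar E T (Var 3)"
  have mm: "mk_modular_alg ar (FA ar E T) 3 3" using H FA_model[OF idE, of T] by blast
  have cA: "congruence ar (FA ar E T) (K gA)" and cB: "congruence ar (FA ar E T) (K gB)"
    and cC: "congruence ar (FA ar E T) (K gC)" unfolding K_def by (rule kern_cong)+
  have xy: "(x, y) \<in> K gB" unfolding K_def x_def y_def by (rule kern_vars) (simp add: gB_def)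
  have yz: "(y, z) \<in> K gA \<inter> K gC" unfolding K_def y_def z_def
    by (intro IntI kern_vars) (simp_all add: gA_def gC_def)
  have zw: "(z, w) \<in> K gB" unfolding K_def z_def w_def by (rule kern_vars) (simp add: gB_def)
  have xw: "(x, w) \<in> K gA" unfolding K_def x_def w_def by (rule kern_vars) (simp add: gA_def)
  have "(x, w) \<in> K gA \<inter> alt_comp (K gB) (K gA \<inter> K gC) 3"
    using xy yz zw xw by (auto simp: numeral_3_eq_3)
  then have "(x, w) \<in> alt_comp (K gA \<inter> K gB) (K gA \<inter> K gC) 3"
    using mm cA cB cC unfolding mk_modular_alg_def by blast
  then obtain e1 e2 where 1: "(x, e1) \<in> K gA \<inter> K gB" and 2: "(e1, e2) \<in> K gA \<inter> K gC"
    and 3: "(e2, w) \<in> K gA \<inter> K gB" by (auto simp: numeral_3_eq_3)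
  have "semeq ar E T (ren gA e1) (Var (gA 0))" using 1 kern_var_l unfolding K_def x_def by blast
  moreover have "semeq ar E T (ren gB e1) (Var (gB 0))" using 1 kern_var_l unfolding K_def x_def by blast
  moreover have "semeq ar E T (ren gA e2) (Var (gA 3))" using 3 kern_var_r unfolding K_def w_def by blast
  moreover have "semeq ar E T (ren gB e2) (Var (gB 3))" using 3 kern_var_r unfolding K_def w_def by blast
  moreover have "semeq ar E T (ren gC e1) (ren gC e2)" using 2 kern_semeq unfolding K_def by blast
  moreover have "wf_trm ar e1 \<and> wf_trm ar e2" using 2 kern_wf unfolding K_def by blast
  ultimately show ?thesis by (auto simp: gA_def gB_def)
qed

lemma extract4:
  fixes ar :: "'f \<Rightarrow> nat" and E :: "(('f, nat) trm \<times> ('f, nat) trm) set" and T :: "'a itself"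
  assumes idE: "identities ar E"
    and H: "\<forall>A :: ('f, ('f, nat) trm) alg. model ar E A \<longrightarrow> mk_modular_alg ar A 3 4"
  shows "\<exists>e1 e2 e3. wf_trm ar e1 \<and> wf_trm ar e2 \<and> wf_trm ar e3
    \<and> semeq ar E T (ren gA e1) (Var 0) \<and> semeq ar E T (ren gA e2) (Var 0) \<and> semeq ar E T (ren gA e3) (Var 0)
    \<and> semeq ar E T (ren gB e1) (Var 0) \<and> semeq ar E T (ren gC e1) (ren gC e2)
    \<and> semeq ar E T (ren gB e2) (ren gB e3) \<and> semeq ar E T (ren gC e3) (Var 3)"
proof -
  define K where "K = kern ar E T"
  define x where "x = frep ar E T (Var 0)"
  define y where "y = frep ar E T (Var 1)"
  define z where "z = frep ar E T (Var 2)"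
  define w where "w = frep ar E T (Var 3)"
  have mm: "mk_modular_alg ar (FA ar E T) 3 4" using H FA_model[OF idE, of T] by blast
  have cA: "congruence ar (FA ar E T) (K gA)" and cB: "congruence ar (FA ar E T) (K gB)"
    and cC: "congruence ar (FA ar E T) (K gC)" unfolding K_def by (rule kern_cong)+
  have xy: "(x, y) \<in> K gB" unfolding K_def x_def y_def by (rule kern_vars) (simp add: gB_def)
  have yz: "(y, z) \<in> K gA \<inter> K gC" unfolding K_def y_def z_def
    by (intro IntI kern_vars) (simp_all add: gA_def gC_def)
  have zw: "(z, w) \<in> K gB" unfolding K_def z_def w_def by (rule kern_vars) (simp add: gB_def)
  have xw: "(x, w) \<in> K gA" unfolding K_def x_def w_def by (rule kern_vars) (simp add: gA_def)
  have "(x, w) \<in> K gA \<inter> alt_comp (K gB) (K gA \<inter> K gC) 3"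
    using xy yz zw xw by (auto simp: numeral_3_eq_3)
  then have "(x, w) \<in> alt_comp (K gA \<inter> K gB) (K gA \<inter> K gC) 4"
    using mm cA cB cC unfolding mk_modular_alg_def by blast
  then obtain e1 e2 e3 where 1: "(x, e1) \<in> K gA \<inter> K gB" and 2: "(e1, e2) \<in> K gA \<inter> K gC"
    and 3: "(e2, e3) \<in> K gA \<inter> K gB" and 4: "(e3, w) \<in> K gA \<inter> K gC"
    by (auto simp: eval_nat_numeral)
  have a1: "semeq ar E T (ren gA e1) (Var (gA 0))" using 1 kern_var_l unfolding K_def x_def by blast
  moreover have "semeq ar E T (ren gB e1) (Var (gB 0))" using 1 kern_var_l unfolding K_def x_def by blast
  moreover have a3: "semeq ar E T (ren gA e3) (Var (gA 3))" using 4 kern_var_r unfolding K_def w_def by blast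
  moreover have "semeq ar E T (ren gC e3) (Var (gC 3))" using 4 kern_var_r unfolding K_def w_def by blast
  moreover have "semeq ar E T (ren gC e1) (ren gC e2)" using 2 kern_semeq unfolding K_def by blast
  moreover have "semeq ar E T (ren gB e2) (ren gB e3)" using 3 kern_semeq unfolding K_def by blast
  moreover have "semeq ar E T (ren gA e2) (Var (gA 0))"
  proof -
    have "semeq ar E T (ren gA e1) (ren gA e2)" using 2 kern_semeq unfolding K_def by blast
    then show ?thesis using a1 semeq_trans semeq_sym by metis
  qed
  moreover have "wf_trm ar e1 \<and> wf_trm ar e2 \<and> wf_trm ar e3" using 2 3 kern_wf unfolding K_def by blast
  ultimately show ?thesis by (auto simp: gA_def gB_def gC_def)
qed

theorem proposition3p5:
  fixes ar :: "'f \<Rightarrow> nat"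
    and E :: "(('f, nat) trm \<times> ('f, nat) trm) set"
  assumes "identities ar E"
  shows "((\<forall>A :: ('f, ('f, nat) trm) alg. model ar E A \<longrightarrow> mk_modular_alg ar A 3 3)
            \<longrightarrow> (\<forall>m\<ge>3. \<forall>A :: ('f, 'a) alg. model ar E A \<longrightarrow> mk_modular_alg ar A m m))
       \<and> ((\<forall>A :: ('f, ('f, nat) trm) alg. model ar E A \<longrightarrow> mk_modular_alg ar A 3 4)
            \<longrightarrow> (\<forall>q\<ge>2. \<forall>A :: ('f, 'a) alg. model ar E A \<longrightarrow> mk_modular_alg ar A (2^q - 1) (2^q)))"
proof (intro conjI impI allI)
  fix m :: nat and A :: "('f, 'a) alg"
  assume H: "\<forall>A :: ('f, ('f, nat) trm) alg. model ar E A \<longrightarrow> mk_modular_alg ar A 3 3"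
    and m3: "3 \<le> m" and mA: "model ar E A"
  obtain e1 e2 where w1: "wf_trm ar e1" and w2: "wf_trm ar e2"
    and s1: "semeq ar E TYPE('a) (ren gA e1) (Var 0)" and s2: "semeq ar E TYPE('a) (ren gA e2) (Var 0)"
    and s3: "semeq ar E TYPE('a) (ren gB e1) (Var 0)" and s4: "semeq ar E TYPE('a) (ren gC e1) (ren gC e2)"
    and s5: "semeq ar E TYPE('a) (ren gB e2) (Var 2)"
    using extract3[OF assms H, where T = "TYPE('a)"] by blast
  have alg: "is_alg ar A" using mA unfolding model_def by simp
  have ec: "\<forall>v. env4 a b c d v \<in> carr A" if "a \<in> carr A" "b \<in> carr A" "c \<in> carr A" "d \<in> carr A" for a b c d
    using env4_carr that by metis
  have J1a: "eval A (env4 a b b a) e1 = a" if "a \<in> carr A" "b \<in> carr A" for a b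
    using semeq_g[OF s1 mA ec[OF that that(2) that(1)], unfolded env_gA] by (simp add: env4_def)
  have J1b: "eval A (env4 a b b a) e2 = a" if "a \<in> carr A" "b \<in> carr A" for a b
    using semeq_g[OF s2 mA ec[OF that that(2) that(1)], unfolded env_gA] by (simp add: env4_def)
  have J2: "eval A (env4 a a c c) e1 = a" if "a \<in> carr A" "c \<in> carr A" for a c
    using semeq_g[OF s3 mA ec[OF that(1) that(1) that(2) that(2)], unfolded env_gB] by (simp add: env4_def)
  have J3: "eval A (env4 a b b d) e1 = eval A (env4 a b b d) e2"
    if "a \<in> carr A" "b \<in> carr A" "d \<in> carr A" for a b d
    using semeq_g[OF s4 mA ec[OF that(1) that(2) that(2) that(3)], unfolded env_gC] by (simp add: eval_ren env_gC env_gB)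
  have J4: "eval A (env4 a a c c) e2 = c" if "a \<in> carr A" "c \<in> carr A" for a c
    using semeq_g[OF s5 mA ec[OF that(1) that(1) that(2) that(2)], unfolded env_gB] by (simp add: env4_def)
  show "mk_modular_alg ar A m m" unfolding mk_modular_alg_def
  proof (intro allI impI)
    fix \<alpha> \<beta> \<gamma> assume c: "congruence ar A \<alpha> \<and> congruence ar A \<beta> \<and> congruence ar A \<gamma>"
    show "\<alpha> \<inter> alt_comp \<beta> (\<alpha> \<inter> \<gamma>) m \<subseteq> alt_comp (\<alpha> \<inter> \<beta>) (\<alpha> \<inter> \<gamma>) m"
      using single_i[OF alg _ _ _ w1 w2 J1a J1b J2 J3 J4, of \<alpha> \<beta> \<gamma> m] c m3 by auto
  qed
next
  fix q :: nat and A :: "('f, 'a) alg"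
  assume H: "\<forall>A :: ('f, ('f, nat) trm) alg. model ar E A \<longrightarrow> mk_modular_alg ar A 3 4"
    and q2: "2 \<le> q" and mA: "model ar E A"
  obtain e1 e2 e3 where w1: "wf_trm ar e1" and w2: "wf_trm ar e2" and w3: "wf_trm ar e3"
    and s1: "semeq ar E TYPE('a) (ren gA e1) (Var 0)" and s2: "semeq ar E TYPE('a) (ren gA e2) (Var 0)"
    and s3: "semeq ar E TYPE('a) (ren gA e3) (Var 0)"
    and s4: "semeq ar E TYPE('a) (ren gB e1) (Var 0)" and s5: "semeq ar E TYPE('a) (ren gC e1) (ren gC e2)"
    and s6: "semeq ar E TYPE('a) (ren gB e2) (ren gB e3)" and s7: "semeq ar E TYPE('a) (ren gC e3) (Var 3)"
    using extract4[OF assms H, where T = "TYPE('a)"] by blast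
  have alg: "is_alg ar A" using mA unfolding model_def by simp
  have ec: "\<forall>v. env4 a b c d v \<in> carr A" if "a \<in> carr A" "b \<in> carr A" "c \<in> carr A" "d \<in> carr A" for a b c d
    using env4_carr that by metis
  have I1a: "eval A (env4 a b b a) e1 = a" if "a \<in> carr A" "b \<in> carr A" for a b
    using semeq_g[OF s1 mA ec[OF that that(2) that(1)], unfolded env_gA] by (simp add: env4_def)
  have I1b: "eval A (env4 a b b a) e2 = a" if "a \<in> carr A" "b \<in> carr A" for a b
    using semeq_g[OF s2 mA ec[OF that that(2) that(1)], unfolded env_gA] by (simp add: env4_def)
  have I1c: "eval A (env4 a b b a) e3 = a" if "a \<in> carr A" "b \<in> carr A" for a b
    using semeq_g[OF s3 mA ec[OF that that(2) that(1)], unfolded env_gA] by (simp add: env4_def)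
  have I2: "eval A (env4 a a c c) e1 = a" if "a \<in> carr A" "c \<in> carr A" for a c
    using semeq_g[OF s4 mA ec[OF that(1) that(1) that(2) that(2)], unfolded env_gB] by (simp add: env4_def)
  have I3: "eval A (env4 a b b d) e1 = eval A (env4 a b b d) e2"
    if "a \<in> carr A" "b \<in> carr A" "d \<in> carr A" for a b d
    using semeq_g[OF s5 mA ec[OF that(1) that(2) that(2) that(3)], unfolded env_gC] by (simp add: eval_ren env_gC env_gB)
  have I4: "eval A (env4 a a c c) e2 = eval A (env4 a a c c) e3" if "a \<in> carr A" "c \<in> carr A" for a c
    using semeq_g[OF s6 mA ec[OF that(1) that(1) that(2) that(2)], unfolded env_gB] by (simp add: eval_ren env_gC env_gB)
  have I5: "eval A (env4 a b b d) e3 = d" if "a \<in> carr A" "b \<in> carr A" "d \<in> carr A" for a b d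
    using semeq_g[OF s7 mA ec[OF that(1) that(2) that(2) that(3)], unfolded env_gC] by (simp add: env4_def)
  obtain q' where q': "q = Suc q'" using q2 by (cases q) auto
  show "mk_modular_alg ar A (2 ^ q - 1) (2 ^ q)" unfolding mk_modular_alg_def
  proof (intro allI impI)
    fix \<alpha> \<beta> \<gamma> assume c: "congruence ar A \<alpha> \<and> congruence ar A \<beta> \<and> congruence ar A \<gamma>"
    show "\<alpha> \<inter> alt_comp \<beta> (\<alpha> \<inter> \<gamma>) (2 ^ q - 1) \<subseteq> alt_comp (\<alpha> \<inter> \<beta>) (\<alpha> \<inter> \<gamma>) (2 ^ q)"
      unfolding q' using single_ii[OF alg _ _ _ w1 w2 w3 I1a I1b I1c I2 I3 I4 I5, of \<alpha> \<beta> \<gamma> q'] c by auto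
  qed
qed


end
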